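(* For all real numbers $r,k$, the map $f(x)=x^2\exp(r-x)+k$, $x\in\mathbb{R}$, has negative Schwarzian derivative, i.e. \[ Sf(x)=\frac{f'''(x)}{f'(x)}-\frac{3}{2}\left(\frac{f''(x)}{f'(x)}\right)^2<0 \] for every $x\in\mathbb{R}$ with $f'(x)\neq 0$ (that is, for every $x\notin\{0,2\}$). *)

theory Defs
  imports "HOL-Analysis.Analysis"
begin

definition schwarzian :: "(real \<Rightarrow> real) \<Rightarrow> real \<Rightarrow> real" where
  "schwarzian f x =
     (deriv ^^ 3) f x / deriv f x - 3 / 2 * ((deriv ^^ 2) f x / deriv f x)^2"

end

theory Submission
  imports Defs
begin


theorem proposition2p1:
  fixes r k x :: real
  defines "f \<equiv> (\<lambda>t::real. t^2 * exp (r - t) + k)"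
  assumes "deriv f x \<noteq> 0"
  shows "schwarzian f x < 0"
proof -
  have d1: "deriv f = (\<lambda>t. (2*t - t^2) * exp (r - t))"
  proof
    fix t
    have "(f has_real_derivative (2*t - t^2) * exp (r - t)) (at t)"
      unfolding f_def by (auto intro!: derivative_eq_intros simp: algebra_simps power2_eq_square)
    then show "deriv f t = (2*t - t^2) * exp (r - t)" by (rule DERIV_imp_deriv)
  qed
  have d2: "deriv (deriv f) = (\<lambda>t. (t^2 - 4*t + 2) * exp (r - t))"
  proof
    fix t
    have "((\<lambda>t. (2*t - t^2) * exp (r - t)) has_real_derivative (t^2 - 4*t + 2) * exp (r - t)) (at t)"
      by (auto intro!: derivative_eq_intros simp: algebra_simps power2_eq_square)
    then show "deriv (deriv f) t = (t^2 - 4*t + 2) * exp (r - t)" unfolding d1 by (rule DERIV_imp_deriv)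
  qed
  have d3: "deriv (deriv (deriv f)) = (\<lambda>t. (6*t - t^2 - 6) * exp (r - t))"
  proof
    fix t
    have "((\<lambda>t. (t^2 - 4*t + 2) * exp (r - t)) has_real_derivative (6*t - t^2 - 6) * exp (r - t)) (at t)"
      by (auto intro!: derivative_eq_intros simp: algebra_simps power2_eq_square)
    then show "deriv (deriv (deriv f)) t = (6*t - t^2 - 6) * exp (r - t)" unfolding d2 by (rule DERIV_imp_deriv)
  qed
  define E where "E = exp (r - x)"
  define p where "p = 2*x - x^2"
  have E: "E > 0" unfolding E_def by simp
  have p: "p \<noteq> 0" using assms(2) unfolding d1 p_def by simp
  have v1: "deriv f x = p * E" unfolding d1 p_def E_def by simp
  have v2: "(deriv ^^ 2) f x = (x^2 - 4*x + 2) * E"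
    by (simp add: numeral_2_eq_2 d2 E_def)
  have v3: "(deriv ^^ 3) f x = (6*x - x^2 - 6) * E"
    by (simp add: numeral_3_eq_3 d3 E_def)
  have S: "schwarzian f x = (6*x - x^2 - 6) / p - 3/2 * ((x^2 - 4*x + 2) / p)^2"
    unfolding schwarzian_def v1 v2 v3 using E by simp
  have key: "2*p*(6*x - x^2 - 6) - 3*(x^2 - 4*x + 2)^2 < 0"
  proof -
    have "2*p*(6*x - x^2 - 6) - 3*(x^2 - 4*x + 2)^2 = -((x-2)^4 + 8*x - 4)"
      unfolding p_def by (simp add: power2_eq_square power4_eq_xxxx algebra_simps eval_nat_numeral)
    moreover have "(x-2)^4 + 8*x - 4 > 0"
    proof -
      have "(x-2)^4 + 8*x - 4 = ((x-2)^2 - 2)^2 + 4*(x-1)^2 + 4"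
        by (simp add: power2_eq_square power4_eq_xxxx algebra_simps eval_nat_numeral)
      moreover have "((x-2)^2 - 2)^2 + 4*(x-1)^2 \<ge> 0" by simp
      ultimately show ?thesis by linarith
    qed
    ultimately show ?thesis by linarith
  qed
  have p2: "p^2 > 0" using p by simp
  have "schwarzian f x * (2*p^2) = 2*p*(6*x - x^2 - 6) - 3*(x^2 - 4*x + 2)^2"
    unfolding S using p by (simp add: field_simps power2_eq_square)
  with key have "schwarzian f x * (2*p^2) < 0" by simp
  with p2 show ?thesis by (simp add: mult_less_0_iff)
qed

end
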